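(* Let $A\subset M$ and $f:M\to\mathbb{R}$ be such that all quantities below are finite. Then \[ 2\inf_{x\in A}\big[f(x)+W(x)\big]-2W(O_1)-h_1\ \ge\ \min_{j\in L}R^{(2)}_j, \] where $R^{(2)}_1=2\inf_{x\in A}[f(x)+V(O_1,x)]-h_1$ and, for $j\in L\setminus\{1\}$, $R^{(2)}_j=2\inf_{x\in A}[f(x)+V(O_j,x)]+W(O_j)-2W(O_1)+W(O_1\cup O_j)$.
   Context: $V:M\times M\to[0,\infty)$ is the Freidlin–Wentzell quasipotential of a small-noise diffusion on a compact manifold $M$: $V(x,y)=\inf\{I_T(\phi):\phi(0)=x,\phi(T)=y,T<\infty\}$ where $I_T(\phi)=\int_0^T\frac12\langle\dot\phi_t-b(\phi_t),[\sigma(\phi_t)\sigma(\phi_t)^T]^{-1}(\dot\phi_t-b(\phi_t))\rangle dt$. $O_1,\dots,O_l$ ($l\ge2$) are the equilibrium points, $L=\{1,\dots,l\}$. Graphs: for $W\subset L$, a $W$-graph on $L$ is a set of arrows $i\to j$ ($i\in L\setminus W$, $j\in L$, $j\ne i$) such that every $i\in L\setminus W$ is the initial point of exactly one arrow and from every $i\in L\setminus W$ a sequence of arrows leads into $W$; $G(W)$ is the set of $W$-graphs, $G(j)=G(\{j\})$, $G(i,j)=G(\{i,j\})$. $W(O_j)=\min_{g\in G(j)}\sum_{(m\to n)\in g}V(O_m,O_n)$, $W(O_1\cup O_j)=\min_{g\in G(1,j)}\sum_{(m\to n)\in g}V(O_m,O_n)$ for $j\ne1$, $W(x)=\min_{j\in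 L}[W(O_j)+V(O_j,x)]$, and $h_1=\min_{\ell\in L\setminus\{1\}}V(O_1,O_\ell)$. *)

theory Defs
  imports Complex_Main
begin

text \<open>Abstract setting: points of M have type 'a, the quasipotential is
  V :: 'a => 'a => real, the equilibria are Eq 1, ..., Eq l, L = {1..l}.\<close>

definition Wgraphs :: "nat set \<Rightarrow> nat set \<Rightarrow> (nat \<times> nat) set set" where
  "Wgraphs L W = {g. g \<subseteq> (L - W) \<times> L
      \<and> (\<forall>(i,j)\<in>g. i \<noteq> j)
      \<and> (\<forall>i\<in>L - W. \<exists>!j. (i,j) \<in> g)
      \<and> (\<forall>i\<in>L - W. \<exists>w\<in>W. (i,w) \<in> g\<^sup>+)}"

definition gcost :: "('a \<Rightarrow> 'a \<Rightarrow> real) \<Rightarrow> (nat \<Rightarrow> 'a) \<Rightarrow> (nat \<times> nat) set \<Rightarrow> real" where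
  "gcost V Eq g = (\<Sum>(m,n)\<in>g. V (Eq m) (Eq n))"

definition Wset :: "('a \<Rightarrow> 'a \<Rightarrow> real) \<Rightarrow> (nat \<Rightarrow> 'a) \<Rightarrow> nat set \<Rightarrow> nat set \<Rightarrow> real" where
  "Wset V Eq L W = Min (gcost V Eq ` Wgraphs L W)"

definition Wpt :: "('a \<Rightarrow> 'a \<Rightarrow> real) \<Rightarrow> (nat \<Rightarrow> 'a) \<Rightarrow> nat set \<Rightarrow> 'a \<Rightarrow> real" where
  "Wpt V Eq L x = Min ((\<lambda>j. Wset V Eq L {j} + V (Eq j) x) ` L)"

definition h1 :: "('a \<Rightarrow> 'a \<Rightarrow> real) \<Rightarrow> (nat \<Rightarrow> 'a) \<Rightarrow> nat set \<Rightarrow> real" where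
  "h1 V Eq L = Min ((\<lambda>k. V (Eq 1) (Eq k)) ` (L - {1}))"

end

theory Submission
  imports Defs
begin

lemma Wgraphs_finite: "finite L \<Longrightarrow> finite (Wgraphs L W)"
proof -
  assume "finite L"
  have "Wgraphs L W \<subseteq> Pow (L \<times> L)" unfolding Wgraphs_def by auto
  thus ?thesis using \<open>finite L\<close> by (meson finite_Pow_iff finite_SigmaI finite_subset)
qed

lemma Wgraphs_ne: assumes "j \<in> L" shows "{(i,j) | i. i \<in> L - {j}} \<in> Wgraphs L {j}"
  using assms unfolding Wgraphs_def by auto

lemma path_lemma:
  assumes "(i,w) \<in> g\<^sup>+" "i \<noteq> 1"
  shows "(i,w) \<in> (g - {(1,k)})\<^sup>+ \<or> (i,1) \<in> (g - {(1,k)})\<^sup>+"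
  using assms
proof (induction rule: converse_trancl_induct)
  case (base y)
  thus ?case by auto
next
  case (step y z)
  have yz: "(y,z) \<in> g - {(1,k)}" using step by auto
  show ?case
  proof (cases "z = 1")
    case True thus ?thesis using yz by auto
  next
    case False
    then have "(z,w) \<in> (g - {(1,k)})\<^sup>+ \<or> (z,1) \<in> (g - {(1,k)})\<^sup>+" using step by auto
    thus ?thesis using yz by (meson trancl_into_trancl2)
  qed
qed

lemma W_pair:
  assumes fin: "finite L" and L1: "1 \<in> L" and jL: "j \<in> L" and j1: "j \<noteq> 1"
  shows "Wset V Eq L {1,j} \<le> Wset V Eq L {j} - h1 V Eq L"
proof -
  have fG: "finite (Wgraphs L {j})" using fin by (rule Wgraphs_finite)
  have neG: "Wgraphs L {j} \<noteq> {}" using Wgraphs_ne[OF jL] by blast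
  obtain g where g: "g \<in> Wgraphs L {j}" and gmin: "gcost V Eq g = Wset V Eq L {j}"
  proof -
    have "Min (gcost V Eq ` Wgraphs L {j}) \<in> gcost V Eq ` Wgraphs L {j}"
      using fG neG by (intro Min_in) auto
    thus ?thesis using that unfolding Wset_def by auto
  qed
  have gprops: "g \<subseteq> (L - {j}) \<times> L" "\<forall>(i,k)\<in>g. i \<noteq> k" "\<forall>i\<in>L - {j}. \<exists>!k. (i,k) \<in> g"
    "\<forall>i\<in>L - {j}. \<exists>w\<in>{j}. (i,w) \<in> g\<^sup>+" using g unfolding Wgraphs_def by auto
  obtain k where k: "(1,k) \<in> g" using gprops(3) L1 j1 by blast
  have kL: "k \<in> L" "k \<noteq> 1" using k gprops(1,2) by auto
  define g' where "g' = g - {(1,k)}"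
  have fing: "finite g" using gprops(1) fin by (meson finite_SigmaI finite_subset Diff_subset)
  have g'W: "g' \<in> Wgraphs L {1,j}"
    unfolding Wgraphs_def
  proof (intro CollectI conjI)
    show "g' \<subseteq> (L - {1, j}) \<times> L" using gprops(1,3) k unfolding g'_def by fastforce
    show "\<forall>(i,k)\<in>g'. i \<noteq> k" using gprops(2) unfolding g'_def by auto
    show "\<forall>i\<in>L - {1, j}. \<exists>!k. (i,k) \<in> g'" using gprops(3) unfolding g'_def by auto
    show "\<forall>i\<in>L - {1, j}. \<exists>w\<in>{1, j}. (i,w) \<in> g'\<^sup>+"
    proof
      fix i assume i: "i \<in> L - {1,j}"
      then have "(i,j) \<in> g\<^sup>+" using gprops(4) by auto
      thus "\<exists>w\<in>{1, j}. (i,w) \<in> g'\<^sup>+" using path_lemma[of i j g k] i unfolding g'_def by auto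
    qed
  qed
  have fG': "finite (Wgraphs L {1,j})" using fin by (rule Wgraphs_finite)
  have c1: "Wset V Eq L {1,j} \<le> gcost V Eq g'"
    unfolding Wset_def using fG' g'W by auto
  have c2: "gcost V Eq g = gcost V Eq g' + V (Eq 1) (Eq k)"
    unfolding gcost_def g'_def using fing k
    by (simp add: sum.remove[of g "(1,k)"] add.commute)
  have c3: "h1 V Eq L \<le> V (Eq 1) (Eq k)"
    unfolding h1_def using fin kL by auto
  show ?thesis using c1 c2 c3 gmin by linarith
qed

lemma aux: assumes "((m::real) + (2 * a + b)) / 2 \<le> I" shows "m \<le> 2 * I - 2 * a - b" using assms
  by (simp add: field_simps)

theorem lemma8p3:
  fixes V :: "'a \<Rightarrow> 'a \<Rightarrow> real" and Eq :: "nat \<Rightarrow> 'a" and l :: nat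
    and A :: "'a set" and f :: "'a \<Rightarrow> real"
  assumes l2: "l \<ge> 2"
    and Vnonneg: "\<And>x y. V x y \<ge> 0"
    and Oinj: "inj_on Eq {1..l}"
    and Ane: "A \<noteq> {}"
    and bdd_W: "bdd_below ((\<lambda>x. f x + Wpt V Eq {1..l} x) ` A)"
    and bdd_V: "\<And>j. j \<in> {1..l} \<Longrightarrow> bdd_below ((\<lambda>x. f x + V (Eq j) x) ` A)"
  shows "2 * (INF x\<in>A. f x + Wpt V Eq {1..l} x) - 2 * Wset V Eq {1..l} {1} - h1 V Eq {1..l}
     \<ge> Min ((\<lambda>j. if j = 1
                 then 2 * (INF x\<in>A. f x + V (Eq 1) x) - h1 V Eq {1..l}
                 else 2 * (INF x\<in>A. f x + V (Eq j) x) + Wset V Eq {1..l} {j}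
                      - 2 * Wset V Eq {1..l} {1} + Wset V Eq {1..l} {1, j}) ` {1..l})"
    (is "_ \<ge> Min (?R ` _)")
proof -
  let ?L = "{1..l}"
  let ?m = "Min (?R ` ?L)"
  let ?c = "2 * Wset V Eq ?L {1} + h1 V Eq ?L"
  have key: "(?m + ?c) / 2 \<le> f x + Wpt V Eq ?L x" if x: "x \<in> A" for x
  proof -
    have ne: "(\<lambda>j. Wset V Eq ?L {j} + V (Eq j) x) ` ?L \<noteq> {}" using l2 by auto
    obtain j where jL: "j \<in> ?L" and jW: "Wpt V Eq ?L x = Wset V Eq ?L {j} + V (Eq j) x"
      unfolding Wpt_def using Min_in[OF _ ne] by auto
    have mR: "?m \<le> ?R j" using jL by auto
    have inf: "(INF y\<in>A. f y + V (Eq j) y) \<le> f x + V (Eq j) x"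
      using cINF_lower[OF bdd_V[OF jL] x] .
    show ?thesis
    proof (cases "j = 1")
      case True
      thus ?thesis using mR inf jW by simp
    next
      case False
      have "Wset V Eq ?L {1,j} \<le> Wset V Eq ?L {j} - h1 V Eq ?L"
        using W_pair[of ?L j V Eq] jL False l2 by auto
      thus ?thesis using mR inf jW False by simp
    qed
  qed
  have "(?m + ?c) / 2 \<le> (INF x\<in>A. f x + Wpt V Eq ?L x)"
    using Ane key by (intro cINF_greatest) auto
  thus ?thesis by (rule aux)
qed

end
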